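(* Let $\{(X_s,\|\cdot\|_s)\}_{s\in\mathbb N_0}$ be a sequence of reflexive Banach spaces such that $\{0\}\neq\bigcap_{s}X_s\subseteq\cdots\subseteq X_2\subseteq X_1\subseteq X_0$, $\|\cdot\|_0\le\|\cdot\|_1\le\|\cdot\|_2\le\cdots$, and $X_F:=\bigcap_s X_s$ is dense in $X_s$ for every $s$. Let $\{g_i\}_{i=1}^\infty\in(X_0^* )^{\mathbb N}$ with $g_i\ne0$ for all $i$. For $s\in\mathbb N_0$ and a scalar sequence $c=\{c_i\}$ put $M^c_s:=\{f\in X_s: |c_i|\le|g_i(f)|\ \forall i\}$, and define $$\Theta_s:=\{c: M^c_s\neq\varnothing\},\qquad \|c\|_s:=\inf\{\|f\|_s: f\in M^c_s\}.$$ Consider for $s\in\mathbb N_0$: $(\mathcal A_1^s)$: for all $c,d\in\Theta_s$, $f\in M^c_s$, $h\in M^d_s$ there is $r\in M^{c+d}_s$ with $\|r\|_s\le\|f\|_s+\|h\|_s$; $(\mathcal A_2^s)$: for every $c\in\Theta_s$ and $\varepsilon>0$ there exist $k\in\mathbb N$ and $f\in M^{c^{(k)}}_s$ with $\|f\|_s<\varepsilon$, where $c^{(k)}=\{0,\dots,0,c_{k+1},c_{k+2},\dots\}$; $(\mathcal A_3^s)$: there is $A_s\in(0,1]$ such that for every $f\in X_s$ and every $\widetilde f\in M_s^{\{g_i(f)\}_{i=1}^\infty}$, $A_s\|f\|_s\le\|\widetilde f\|_s$. Assume $(\mathcal A_1^s)$ holds for every $s\in\mathbb N_0$. Then: $(\mathcal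 P_1)$ $\{\Theta_s\}_{s\in\mathbb N_0}$ is a sequence of solid $BK$-spaces with $\bigcap_s\Theta_s\neq\{0\}$, $\cdots\subseteq\Theta_2\subseteq\Theta_1\subseteq\Theta_0$ and $\|\cdot\|_0\le\|\cdot\|_1\le\cdots$ on these spaces, such that $\{g_i|_{X_s}\}$ is a $\Theta_s$-Bessel sequence for $X_s$ with bound $1$ for every $s\in\mathbb N_0$; $(\mathcal P_2)$ for every $s\in\mathbb N$, $\{g_i|_{X_s}\}$ is a $\Theta_s$-frame for $X_s$ if and only if $(\mathcal A_3^s)$ holds, and if $(\mathcal A_3^s)$ holds with $A_s=1$ then $\{g_i|_{X_s}\}$ is a tight $\Theta_s$-frame for $X_s$; $(\mathcal P_3)$ for every $s\in\mathbb N$, $\Theta_s$ is a $CB$-space if and only if $(\mathcal A_2^s)$ holds.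
   Context: A Banach sequence space $\Theta$ is solid if $\{c_i\}\in\Theta$ and $|d_i|\le|c_i|$ for all $i$ imply $\{d_i\}\in\Theta$ with $\|\{d_i\}\|_\Theta\le\|\{c_i\}\|_\Theta$; a $BK$-space if coordinate functionals are continuous; a $CB$-space if it is a $BK$-space whose canonical unit vectors form a Schauder basis. For a Banach space $Y$ and a Banach sequence space $\Theta$, $\{g_i\}\subset Y^*$ is a $\Theta$-Bessel sequence for $Y$ with bound $B$ if $\{g_i(f)\}\in\Theta$ and $\|\{g_i(f)\}\|_\Theta\le B\|f\|$ for all $f\in Y$; a $\Theta$-frame if additionally $A\|f\|\le\|\{g_i(f)\}\|_\Theta$ for some $A>0$ and all $f$; tight if one can take $A=B$. *)

theory Defs
  imports "HOL-Analysis.Analysis"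
begin

definition lin_on :: "'a::real_vector set \<Rightarrow> ('a \<Rightarrow> real) \<Rightarrow> bool" where
  "lin_on V \<phi> \<longleftrightarrow> (\<forall>x\<in>V. \<forall>y\<in>V. \<phi> (x + y) = \<phi> x + \<phi> y) \<and>
                    (\<forall>a. \<forall>x\<in>V. \<phi> (a *\<^sub>R x) = a * \<phi> x)"

definition banach_on :: "'a::real_vector set \<Rightarrow> ('a \<Rightarrow> real) \<Rightarrow> bool" where
  "banach_on V N \<longleftrightarrow> subspace V \<and>
     (\<forall>x\<in>V. N x \<ge> 0 \<and> (N x = 0 \<longleftrightarrow> x = 0)) \<and>
     (\<forall>a. \<forall>x\<in>V. N (a *\<^sub>R x) = \<bar>a\<bar> * N x) \<and>
     (\<forall>x\<in>V. \<forall>y\<in>V. N (x + y) \<le> N x + N y) \<and>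
     (\<forall>u. (\<forall>n. u n \<in> V) \<longrightarrow> (\<forall>e>0. \<exists>M. \<forall>m\<ge>M. \<forall>n\<ge>M. N (u m - u n) < e) \<longrightarrow>
          (\<exists>x\<in>V. (\<lambda>n. N (u n - x)) \<longlonglongrightarrow> 0))"

definition dual_on :: "'a::real_vector set \<Rightarrow> ('a \<Rightarrow> real) \<Rightarrow> ('a \<Rightarrow> real) set" where
  "dual_on V N = {\<phi>. lin_on V \<phi> \<and> (\<exists>C. \<forall>x\<in>V. \<bar>\<phi> x\<bar> \<le> C * N x) \<and> (\<forall>x. x \<notin> V \<longrightarrow> \<phi> x = 0)}"

definition dual_norm :: "'a::real_vector set \<Rightarrow> ('a \<Rightarrow> real) \<Rightarrow> ('a \<Rightarrow> real) \<Rightarrow> real" where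
  "dual_norm V N \<phi> = Sup {\<bar>\<phi> x\<bar> | x. x \<in> V \<and> N x \<le> 1}"

text \<open>Reflexivity: the canonical embedding into the bidual is surjective, i.e. every
  bounded linear functional on the dual space is evaluation at some point of V.\<close>
definition reflexive_on :: "'a::real_vector set \<Rightarrow> ('a \<Rightarrow> real) \<Rightarrow> bool" where
  "reflexive_on V N \<longleftrightarrow>
    (\<forall>\<Phi> :: ('a \<Rightarrow> real) \<Rightarrow> real.
       (\<forall>\<phi>\<in>dual_on V N. \<forall>\<psi>\<in>dual_on V N. \<Phi> (\<lambda>x. \<phi> x + \<psi> x) = \<Phi> \<phi> + \<Phi> \<psi>) \<and>
       (\<forall>a. \<forall>\<phi>\<in>dual_on V N. \<Phi> (\<lambda>x. a * \<phi> x) = a * \<Phi> \<phi>) \<and>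
       (\<exists>C. \<forall>\<phi>\<in>dual_on V N. \<bar>\<Phi> \<phi>\<bar> \<le> C * dual_norm V N \<phi>)
     \<longrightarrow> (\<exists>x\<in>V. \<forall>\<phi>\<in>dual_on V N. \<Phi> \<phi> = \<phi> x))"

definition banach_seq_space :: "(nat \<Rightarrow> real) set \<Rightarrow> ((nat \<Rightarrow> real) \<Rightarrow> real) \<Rightarrow> bool" where
  "banach_seq_space \<Theta> nr \<longleftrightarrow>
     (\<lambda>i. 0) \<in> \<Theta> \<and>
     (\<forall>c\<in>\<Theta>. \<forall>d\<in>\<Theta>. (\<lambda>i. c i + d i) \<in> \<Theta>) \<and>
     (\<forall>a. \<forall>c\<in>\<Theta>. (\<lambda>i. a * c i) \<in> \<Theta>) \<and>
     (\<forall>c\<in>\<Theta>. nr c \<ge> 0 \<and> (nr c = 0 \<longleftrightarrow> c = (\<lambda>i. 0))) \<and>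
     (\<forall>a. \<forall>c\<in>\<Theta>. nr (\<lambda>i. a * c i) = \<bar>a\<bar> * nr c) \<and>
     (\<forall>c\<in>\<Theta>. \<forall>d\<in>\<Theta>. nr (\<lambda>i. c i + d i) \<le> nr c + nr d) \<and>
     (\<forall>u. (\<forall>n. u n \<in> \<Theta>) \<longrightarrow>
          (\<forall>e>0. \<exists>M. \<forall>m\<ge>M. \<forall>n\<ge>M. nr (\<lambda>i. u m i - u n i) < e) \<longrightarrow>
          (\<exists>c\<in>\<Theta>. (\<lambda>n. nr (\<lambda>i. u n i - c i)) \<longlonglongrightarrow> 0))"

definition solid :: "(nat \<Rightarrow> real) set \<Rightarrow> ((nat \<Rightarrow> real) \<Rightarrow> real) \<Rightarrow> bool" where
  "solid \<Theta> nr \<longleftrightarrow> (\<forall>c\<in>\<Theta>. \<forall>d. (\<forall>i. \<bar>d i\<bar> \<le> \<bar>c i\<bar>) \<longrightarrow> d \<in> \<Theta> \<and> nr d \<le> nr c)"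

definition BK_space :: "(nat \<Rightarrow> real) set \<Rightarrow> ((nat \<Rightarrow> real) \<Rightarrow> real) \<Rightarrow> bool" where
  "BK_space \<Theta> nr \<longleftrightarrow> banach_seq_space \<Theta> nr \<and>
     (\<forall>i. \<forall>c\<in>\<Theta>. \<forall>e>0. \<exists>\<delta>>0. \<forall>d\<in>\<Theta>. nr (\<lambda>j. d j - c j) < \<delta> \<longrightarrow> \<bar>d i - c i\<bar> < e)"

definition unit_vec :: "nat \<Rightarrow> nat \<Rightarrow> real" where
  "unit_vec k = (\<lambda>i. if i = k then 1 else 0)"

definition schauder_basis :: "(nat \<Rightarrow> real) set \<Rightarrow> ((nat \<Rightarrow> real) \<Rightarrow> real) \<Rightarrow> (nat \<Rightarrow> nat \<Rightarrow> real) \<Rightarrow> bool" where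
  "schauder_basis \<Theta> nr e \<longleftrightarrow> (\<forall>k. e k \<in> \<Theta>) \<and>
     (\<forall>c\<in>\<Theta>. \<exists>!a :: nat \<Rightarrow> real.
        (\<lambda>n. nr (\<lambda>i. c i - (\<Sum>k<n. a k * e k i))) \<longlonglongrightarrow> 0)"

definition CB_space :: "(nat \<Rightarrow> real) set \<Rightarrow> ((nat \<Rightarrow> real) \<Rightarrow> real) \<Rightarrow> bool" where
  "CB_space \<Theta> nr \<longleftrightarrow> BK_space \<Theta> nr \<and> schauder_basis \<Theta> nr unit_vec"

definition bessel_seq ::
  "'a set \<Rightarrow> ('a \<Rightarrow> real) \<Rightarrow> (nat \<Rightarrow> real) set \<Rightarrow> ((nat \<Rightarrow> real) \<Rightarrow> real) \<Rightarrow> (nat \<Rightarrow> 'a \<Rightarrow> real) \<Rightarrow> real \<Rightarrow> bool" where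
  "bessel_seq Y NY \<Theta> nr g B \<longleftrightarrow> (\<forall>f\<in>Y. (\<lambda>i. g i f) \<in> \<Theta> \<and> nr (\<lambda>i. g i f) \<le> B * NY f)"

definition frame_seq ::
  "'a set \<Rightarrow> ('a \<Rightarrow> real) \<Rightarrow> (nat \<Rightarrow> real) set \<Rightarrow> ((nat \<Rightarrow> real) \<Rightarrow> real) \<Rightarrow> (nat \<Rightarrow> 'a \<Rightarrow> real) \<Rightarrow> bool" where
  "frame_seq Y NY \<Theta> nr g \<longleftrightarrow> (\<exists>B. bessel_seq Y NY \<Theta> nr g B) \<and>
     (\<exists>A>0. \<forall>f\<in>Y. A * NY f \<le> nr (\<lambda>i. g i f))"

definition tight_frame_seq ::
  "'a set \<Rightarrow> ('a \<Rightarrow> real) \<Rightarrow> (nat \<Rightarrow> real) set \<Rightarrow> ((nat \<Rightarrow> real) \<Rightarrow> real) \<Rightarrow> (nat \<Rightarrow> 'a \<Rightarrow> real) \<Rightarrow> bool" where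
  "tight_frame_seq Y NY \<Theta> nr g \<longleftrightarrow> (\<exists>A>0. bessel_seq Y NY \<Theta> nr g A \<and>
     (\<forall>f\<in>Y. A * NY f \<le> nr (\<lambda>i. g i f)))"

definition Mset :: "(nat \<Rightarrow> 'a set) \<Rightarrow> (nat \<Rightarrow> 'a \<Rightarrow> real) \<Rightarrow> nat \<Rightarrow> (nat \<Rightarrow> real) \<Rightarrow> 'a set" where
  "Mset X g s c = {f \<in> X s. \<forall>i. \<bar>c i\<bar> \<le> \<bar>g i f\<bar>}"

definition Theta :: "(nat \<Rightarrow> 'a set) \<Rightarrow> (nat \<Rightarrow> 'a \<Rightarrow> real) \<Rightarrow> nat \<Rightarrow> (nat \<Rightarrow> real) set" where
  "Theta X g s = {c. Mset X g s c \<noteq> {}}"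

definition Theta_norm :: "(nat \<Rightarrow> 'a set) \<Rightarrow> (nat \<Rightarrow> 'a \<Rightarrow> real) \<Rightarrow> (nat \<Rightarrow> 'a \<Rightarrow> real) \<Rightarrow> nat \<Rightarrow> (nat \<Rightarrow> real) \<Rightarrow> real" where
  "Theta_norm X N g s c = Inf (N s ` Mset X g s c)"

definition condA1 :: "(nat \<Rightarrow> 'a set) \<Rightarrow> (nat \<Rightarrow> 'a \<Rightarrow> real) \<Rightarrow> (nat \<Rightarrow> 'a \<Rightarrow> real) \<Rightarrow> nat \<Rightarrow> bool" where
  "condA1 X N g s \<longleftrightarrow> (\<forall>c\<in>Theta X g s. \<forall>d\<in>Theta X g s. \<forall>f\<in>Mset X g s c. \<forall>h\<in>Mset X g s d.
      \<exists>r\<in>Mset X g s (\<lambda>i. c i + d i). N s r \<le> N s f + N s h)"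

text \<open>c^(k) with the first k entries (indices 0..k-1) replaced by 0, k \<ge> 1.\<close>
definition condA2 :: "(nat \<Rightarrow> 'a set) \<Rightarrow> (nat \<Rightarrow> 'a \<Rightarrow> real) \<Rightarrow> (nat \<Rightarrow> 'a \<Rightarrow> real) \<Rightarrow> nat \<Rightarrow> bool" where
  "condA2 X N g s \<longleftrightarrow> (\<forall>c\<in>Theta X g s. \<forall>e>0. \<exists>k\<ge>1.
      \<exists>f\<in>Mset X g s (\<lambda>i. if i < k then 0 else c i). N s f < e)"

definition condA3_with :: "(nat \<Rightarrow> 'a set) \<Rightarrow> (nat \<Rightarrow> 'a \<Rightarrow> real) \<Rightarrow> (nat \<Rightarrow> 'a \<Rightarrow> real) \<Rightarrow> nat \<Rightarrow> real \<Rightarrow> bool" where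
  "condA3_with X N g s A \<longleftrightarrow> 0 < A \<and> A \<le> 1 \<and>
      (\<forall>f\<in>X s. \<forall>ft\<in>Mset X g s (\<lambda>i. g i f). A * N s f \<le> N s ft)"

definition condA3 :: "(nat \<Rightarrow> 'a set) \<Rightarrow> (nat \<Rightarrow> 'a \<Rightarrow> real) \<Rightarrow> (nat \<Rightarrow> 'a \<Rightarrow> real) \<Rightarrow> nat \<Rightarrow> bool" where
  "condA3 X N g s \<longleftrightarrow> (\<exists>A. condA3_with X N g s A)"

end

theory Submission
  imports Defs
begin

definition hb_ok :: "'a::real_vector set \<Rightarrow> ('a \<Rightarrow> real) \<Rightarrow> 'a \<Rightarrow> ('a \<times> real) set \<Rightarrow> bool" where
  "hb_ok V N x0 G \<longleftrightarrow> fst ` G \<subseteq> V \<and> (\<forall>x a b. (x,a)\<in>G \<longrightarrow> (x,b)\<in>G \<longrightarrow> a = b) \<and>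
     (x0, N x0) \<in> G \<and> (\<forall>x a y b. (x,a)\<in>G \<longrightarrow> (y,b)\<in>G \<longrightarrow> (x+y, a+b) \<in> G) \<and>
     (\<forall>x a c. (x,a)\<in>G \<longrightarrow> (c *\<^sub>R x, c*a) \<in> G) \<and> (\<forall>x a. (x,a)\<in>G \<longrightarrow> a \<le> N x)"

lemma banach_onD:
  assumes "banach_on V N"
  shows "subspace V" "\<And>x. x\<in>V \<Longrightarrow> N x \<ge> 0" "\<And>x. x\<in>V \<Longrightarrow> N x = 0 \<longleftrightarrow> x = 0"
    "\<And>a x. x\<in>V \<Longrightarrow> N (a *\<^sub>R x) = \<bar>a\<bar> * N x"
    "\<And>x y. x\<in>V \<Longrightarrow> y\<in>V \<Longrightarrow> N (x + y) \<le> N x + N y"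
  using assms unfolding banach_on_def by auto

lemma hb_base:
  assumes "banach_on V N" "x0 \<in> V"
  shows "hb_ok V N x0 {(c *\<^sub>R x0, c * N x0) | c. True}"
proof -
  have sV: "subspace V" using banach_onD(1)[OF assms(1)] .
  have nn: "N x0 \<ge> 0" using banach_onD(2)[OF assms(1) assms(2)] .
  have func: "a = b" if "c *\<^sub>R x0 = d *\<^sub>R x0" "a = c * N x0" "b = d * N x0" for a b c d
  proof (cases "x0 = 0")
    case True then have "N x0 = 0" using banach_onD(3)[OF assms(1) assms(2)] by simp
    then show ?thesis using that by simp
  next
    case False then have "c = d" using that(1) by (simp add: scaleR_cancel_right)
    then show ?thesis using that by simp
  qed
  show ?thesis unfolding hb_ok_def
  proof (intro conjI allI impI)
    show "fst ` {(c *\<^sub>R x0, c * N x0) |c. True} \<subseteq> V" using sV assms(2) by (auto intro: subspace_scale)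
    show "(x0, N x0) \<in> {(c *\<^sub>R x0, c * N x0) |c. True}" by (auto intro!: exI[of _ 1])
  next
    fix x a b assume "(x, a) \<in> {(c *\<^sub>R x0, c * N x0) |c. True}" "(x, b) \<in> {(c *\<^sub>R x0, c * N x0) |c. True}"
    then show "a = b" using func by auto
  next
    fix x a y b assume "(x, a) \<in> {(c *\<^sub>R x0, c * N x0) |c. True}" "(y, b) \<in> {(c *\<^sub>R x0, c * N x0) |c. True}"
    then obtain c d where "x = c *\<^sub>R x0" "a = c * N x0" "y = d *\<^sub>R x0" "b = d * N x0" by auto
    then have "(x + y, a + b) = ((c+d) *\<^sub>R x0, (c+d) * N x0)" by (simp add: scaleR_add_left distrib_right)
    then show "(x + y, a + b) \<in> {(c *\<^sub>R x0, c * N x0) |c. True}" by blast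
  next
    fix x a c assume "(x, a) \<in> {(c *\<^sub>R x0, c * N x0) |c. True}"
    then obtain d where "x = d *\<^sub>R x0" "a = d * N x0" by auto
    then have "(c *\<^sub>R x, c * a) = ((c*d) *\<^sub>R x0, (c*d) * N x0)" by simp
    then show "(c *\<^sub>R x, c * a) \<in> {(c *\<^sub>R x0, c * N x0) |c. True}" by blast
  next
    fix x a assume "(x, a) \<in> {(c *\<^sub>R x0, c * N x0) |c. True}"
    then obtain c where "x = c *\<^sub>R x0" "a = c * N x0" by auto
    then show "a \<le> N x" using banach_onD(4)[OF assms(1) assms(2)] nn
      by (simp add: mult_right_mono)
  qed
qed

lemma hb_okD:
  assumes "hb_ok V N x0 G"
  shows "\<And>x a. (x,a)\<in>G \<Longrightarrow> x \<in> V"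
    "\<And>x a b. (x,a)\<in>G \<Longrightarrow> (x,b)\<in>G \<Longrightarrow> a = b"
    "(x0, N x0) \<in> G"
    "\<And>x a y b. (x,a)\<in>G \<Longrightarrow> (y,b)\<in>G \<Longrightarrow> (x+y, a+b) \<in> G"
    "\<And>x a c. (x,a)\<in>G \<Longrightarrow> (c *\<^sub>R x, c*a) \<in> G"
    "\<And>x a. (x,a)\<in>G \<Longrightarrow> a \<le> N x"
  using assms unfolding hb_ok_def apply -
  subgoal by (simp add: image_subset_iff) (metis fst_conv)
  by simp_all

lemma hb_zero: assumes "hb_ok V N x0 G" shows "(0, 0) \<in> G"
  using hb_okD(5)[OF assms hb_okD(3)[OF assms], of 0] by simp

lemma hb_extend:
  assumes B: "banach_on V N" and G: "hb_ok V N x0 G" and yV: "y \<in> V" and yG: "y \<notin> fst ` G"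
  shows "\<exists>G'. hb_ok V N x0 G' \<and> G \<subseteq> G' \<and> G' \<noteq> G"
proof -
  note sV = banach_onD(1)[OF B]
  have GV: "x \<in> V" if "(x,a) \<in> G" for x a using hb_okD(1)[OF G that] .
  have key: "b' - N (x' - y) \<le> N (w + y) - b" if "(w,b) \<in> G" "(x',b') \<in> G" for w b x' b'
  proof -
    have "(w + x', b + b') \<in> G" using hb_okD(4)[OF G that] .
    then have "b + b' \<le> N (w + x')" using hb_okD(6)[OF G] by blast
    also have "N (w + x') = N ((w + y) + (x' - y))" by (simp add: algebra_simps)
    also have "\<dots> \<le> N (w + y) + N (x' - y)"
    proof (rule banach_onD(5)[OF B])
      show "w + y \<in> V" by (rule subspace_add[OF sV GV[OF that(1)] yV])
      show "x' - y \<in> V" by (rule subspace_diff[OF sV GV[OF that(2)] yV])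
    qed
    finally show ?thesis by simp
  qed
  define T where "T = {b' - N (x' - y) | x' b'. (x',b') \<in> G}"
  define t where "t = Sup T"
  have T_ne: "T \<noteq> {}" using hb_zero[OF G] unfolding T_def by blast
  have T_bdd: "bdd_above T"
  proof (rule bdd_aboveI[of _ "N (0 + y) - 0"])
    fix z assume "z \<in> T"
    then obtain x' b' where "z = b' - N (x' - y)" "(x',b') \<in> G" unfolding T_def by blast
    then show "z \<le> N (0 + y) - 0" using key[OF hb_zero[OF G]] by simp
  qed
  have t_up: "b' - N (x' - y) \<le> t" if "(x',b') \<in> G" for x' b'
    unfolding t_def using that T_bdd by (intro cSup_upper) (auto simp: T_def)
  have t_lo: "t \<le> N (w + y) - b" if "(w,b) \<in> G" for w b
    unfolding t_def using T_ne key[OF that] by (intro cSup_least) (auto simp: T_def)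
  define G' where "G' = {(x + c *\<^sub>R y, a + c * t) | x a c. (x,a) \<in> G}"
  have GG': "G \<subseteq> G'"
  proof
    fix p assume "p \<in> G"
    moreover obtain x a where "p = (x,a)" by (cases p)
    moreover have "(x,a) = (x + 0 *\<^sub>R y, a + 0 * t)" by simp
    ultimately show "p \<in> G'" unfolding G'_def by blast
  qed
  have "(0 + 1 *\<^sub>R y, 0 + 1 * t) \<in> G'" unfolding G'_def using hb_zero[OF G] by blast
  then have yG': "y \<in> fst ` G'" by (metis fst_conv image_eqI scaleR_one add_0)
  have ok: "hb_ok V N x0 G'" unfolding hb_ok_def
  proof (intro conjI allI impI)
    show "fst ` G' \<subseteq> V" unfolding G'_def using GV sV yV
      by (auto intro!: subspace_add subspace_scale)
    have "(x0, N x0) = (x0 + 0 *\<^sub>R y, N x0 + 0 * t)" by simp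
    then show "(x0, N x0) \<in> G'" unfolding G'_def using hb_okD(3)[OF G] by blast
  next
    fix x a b assume "(x, a) \<in> G'" "(x, b) \<in> G'"
    then obtain x1 a1 c1 x2 a2 c2 where h: "(x1,a1) \<in> G" "(x2,a2) \<in> G"
      "x = x1 + c1 *\<^sub>R y" "a = a1 + c1 * t" "x = x2 + c2 *\<^sub>R y" "b = a2 + c2 * t"
      unfolding G'_def by blast
    have c: "c1 = c2"
    proof (rule ccontr)
      assume ne: "c1 \<noteq> c2"
      have "(x2 + (-1) *\<^sub>R x1, a2 + (-1) * a1) \<in> G"
        using hb_okD(4)[OF G h(2) hb_okD(5)[OF G h(1), of "-1"]] .
      moreover have "x2 + (-1) *\<^sub>R x1 = (c1 - c2) *\<^sub>R y" using h by (simp add: algebra_simps)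
      ultimately have "((c1 - c2) *\<^sub>R y, a2 + (-1) * a1) \<in> G" by simp
      from hb_okD(5)[OF G this, of "1/(c1-c2)"]
      have "(y, (1/(c1-c2)) * (a2 + (-1) * a1)) \<in> G" using ne by simp
      then have "y \<in> fst ` G" by (metis fst_conv image_eqI)
      then show False using yG by simp
    qed
    then have "x1 = x2" using h by simp
    then have "a1 = a2" using hb_okD(2)[OF G] h by blast
    then show "a = b" using h c by simp
  next
    fix x a x' b assume "(x, a) \<in> G'" "(x', b) \<in> G'"
    then obtain x1 a1 c1 x2 a2 c2 where h: "(x1,a1) \<in> G" "(x2,a2) \<in> G"
      "x = x1 + c1 *\<^sub>R y" "a = a1 + c1 * t" "x' = x2 + c2 *\<^sub>R y" "b = a2 + c2 * t"
      unfolding G'_def by blast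
    have "(x1 + x2, a1 + a2) \<in> G" using hb_okD(4)[OF G h(1,2)] .
    moreover have "x + x' = (x1 + x2) + (c1 + c2) *\<^sub>R y" "a + b = (a1 + a2) + (c1 + c2) * t"
      using h by (simp_all add: algebra_simps)
    ultimately show "(x + x', a + b) \<in> G'" unfolding G'_def by blast
  next
    fix x a c assume "(x, a) \<in> G'"
    then obtain x1 a1 c1 where h: "(x1,a1) \<in> G" "x = x1 + c1 *\<^sub>R y" "a = a1 + c1 * t"
      unfolding G'_def by blast
    have "(c *\<^sub>R x1, c * a1) \<in> G" using hb_okD(5)[OF G h(1)] .
    moreover have "c *\<^sub>R x = c *\<^sub>R x1 + (c * c1) *\<^sub>R y" "c * a = c * a1 + (c * c1) * t"
      using h by (simp_all add: algebra_simps)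
    ultimately show "(c *\<^sub>R x, c * a) \<in> G'" unfolding G'_def by blast
  next
    fix x a assume "(x, a) \<in> G'"
    then obtain x1 a1 c where h: "(x1,a1) \<in> G" "x = x1 + c *\<^sub>R y" "a = a1 + c * t"
      unfolding G'_def by blast
    show "a \<le> N x"
    proof (cases c "0::real" rule: linorder_cases)
      case equal then show ?thesis using h hb_okD(6)[OF G] by simp
    next
      case greater
      have m: "((1/c) *\<^sub>R x1, (1/c) * a1) \<in> G" using hb_okD(5)[OF G h(1)] .
      have "t \<le> N ((1/c) *\<^sub>R x1 + y) - (1/c) * a1" using t_lo[OF m] .
      then have "c * t \<le> c * (N ((1/c) *\<^sub>R x1 + y) - (1/c) * a1)" using greater by simp
      also have "\<dots> = c * N ((1/c) *\<^sub>R x1 + y) - a1" using greater by (simp add: algebra_simps)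
      also have "c * N ((1/c) *\<^sub>R x1 + y) = N (c *\<^sub>R ((1/c) *\<^sub>R x1 + y))"
        using banach_onD(4)[OF B, of "(1/c) *\<^sub>R x1 + y" c] greater GV[OF h(1)] sV yV
        by (simp add: subspace_add subspace_scale)
      also have "c *\<^sub>R ((1/c) *\<^sub>R x1 + y) = x" using greater h by (simp add: scaleR_add_right)
      finally show ?thesis using h by simp
    next
      case less
      define d where "d = - c"
      have dp: "d > 0" using less d_def by simp
      have m: "((1/d) *\<^sub>R x1, (1/d) * a1) \<in> G" using hb_okD(5)[OF G h(1)] .
      have "(1/d) * a1 - N ((1/d) *\<^sub>R x1 - y) \<le> t" using t_up[OF m] .
      then have "d * ((1/d) * a1 - N ((1/d) *\<^sub>R x1 - y)) \<le> d * t" using dp by simp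
      then have "a1 - d * N ((1/d) *\<^sub>R x1 - y) \<le> d * t" using dp by (simp add: algebra_simps)
      also have "d * N ((1/d) *\<^sub>R x1 - y) = N (d *\<^sub>R ((1/d) *\<^sub>R x1 - y))"
        using banach_onD(4)[OF B, of "(1/d) *\<^sub>R x1 - y" d] dp GV[OF h(1)] sV yV
        by (simp add: subspace_diff subspace_scale)
      also have "d *\<^sub>R ((1/d) *\<^sub>R x1 - y) = x" using dp h d_def by (simp add: scaleR_diff_right)
      finally show ?thesis using h d_def by simp
    qed
  qed
  show ?thesis using ok GG' yG' yG by blast
qed

lemma hb_chain_union:
  assumes C: "C \<in> chains {G. hb_ok V N x0 G}" and ne: "C \<noteq> {}"
  shows "hb_ok V N x0 (\<Union>C)"
proof -
  have ok: "\<And>G. G \<in> C \<Longrightarrow> hb_ok V N x0 G" using C unfolding chains_def by blast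
  have ch: "\<And>G H. G \<in> C \<Longrightarrow> H \<in> C \<Longrightarrow> G \<subseteq> H \<or> H \<subseteq> G"
    using C unfolding chains_def chain_subset_def by blast
  have two: "\<exists>G\<in>C. p \<in> G \<and> q \<in> G" if pq: "p \<in> \<Union>C" "q \<in> \<Union>C" for p q
  proof -
    obtain G H where "G \<in> C" "H \<in> C" "p \<in> G" "q \<in> H" using pq by blast
    then show ?thesis using ch[of G H] by blast
  qed
  obtain G0 where G0: "G0 \<in> C" using ne by blast
  show ?thesis unfolding hb_ok_def
  proof (intro conjI allI impI)
    show "fst ` \<Union> C \<subseteq> V"
    proof
      fix x assume "x \<in> fst ` \<Union> C"
      then obtain a G where "G \<in> C" "(x,a) \<in> G" by force
      then show "x \<in> V" using hb_okD(1)[OF ok] by blast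
    qed
    show "(x0, N x0) \<in> \<Union> C" using hb_okD(3)[OF ok[OF G0]] G0 by blast
  next
    fix x a b assume "(x, a) \<in> \<Union> C" "(x, b) \<in> \<Union> C"
    then obtain G where "G \<in> C" "(x,a) \<in> G" "(x,b) \<in> G" using two by blast
    then show "a = b" using hb_okD(2)[OF ok] by blast
  next
    fix x a y b assume "(x, a) \<in> \<Union> C" "(y, b) \<in> \<Union> C"
    then obtain G where "G \<in> C" "(x,a) \<in> G" "(y,b) \<in> G" using two by blast
    then show "(x + y, a + b) \<in> \<Union> C" using hb_okD(4)[OF ok] by blast
  next
    fix x a c assume "(x, a) \<in> \<Union> C"
    then obtain G where "G \<in> C" "(x,a) \<in> G" by blast
    then show "(c *\<^sub>R x, c * a) \<in> \<Union> C" using hb_okD(5)[OF ok] by blast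
  next
    fix x a assume "(x, a) \<in> \<Union> C"
    then obtain G where "G \<in> C" "(x,a) \<in> G" by blast
    then show "a \<le> N x" using hb_okD(6)[OF ok] by blast
  qed
qed

lemma hahn_banach_norming:
  assumes B: "banach_on V N" and x0: "x0 \<in> V"
  shows "\<exists>\<phi>. lin_on V \<phi> \<and> \<phi> x0 = N x0 \<and> (\<forall>x\<in>V. \<bar>\<phi> x\<bar> \<le> N x)"
proof -
  have "\<forall>C\<in>chains {G. hb_ok V N x0 G}. \<exists>U\<in>{G. hb_ok V N x0 G}. \<forall>X\<in>C. X \<subseteq> U"
  proof
    fix C assume C: "C \<in> chains {G. hb_ok V N x0 G}"
    show "\<exists>U\<in>{G. hb_ok V N x0 G}. \<forall>X\<in>C. X \<subseteq> U"
    proof (cases "C = {}")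
      case True then show ?thesis using hb_base[OF B x0] by blast
    next
      case False then show ?thesis using hb_chain_union[OF C] by blast
    qed
  qed
  from Zorn_Lemma2[OF this] obtain M where M: "hb_ok V N x0 M"
    and max: "\<And>X. hb_ok V N x0 X \<Longrightarrow> M \<subseteq> X \<Longrightarrow> X = M" by blast
  have dom: "\<exists>a. (x,a) \<in> M" if "x \<in> V" for x
  proof (rule ccontr)
    assume "\<nexists>a. (x, a) \<in> M"
    then have "x \<notin> fst ` M" by force
    from hb_extend[OF B M that this] max show False by blast
  qed
  define \<phi> where "\<phi> x = (THE a. (x,a) \<in> M)" for x
  have phi: "(x, \<phi> x) \<in> M" if xV: "x \<in> V" for x
  proof -
    obtain a where a: "(x,a) \<in> M" using dom[OF xV] by blast
    have "\<phi> x = a" unfolding \<phi>_def using a hb_okD(2)[OF M a] by blast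
    then show ?thesis using a by simp
  qed
  have uniq: "\<phi> x = a" if "(x,a) \<in> M" for x a
    using hb_okD(2)[OF M phi[OF hb_okD(1)[OF M that]] that] .
  note sV = banach_onD(1)[OF B]
  have lin: "lin_on V \<phi>" unfolding lin_on_def
  proof (intro conjI ballI allI)
    fix x y assume "x \<in> V" "y \<in> V"
    show "\<phi> (x + y) = \<phi> x + \<phi> y" by (rule uniq, rule hb_okD(4)[OF M phi phi]) fact+
  next
    fix a x assume "x \<in> V"
    show "\<phi> (a *\<^sub>R x) = a * \<phi> x" by (rule uniq, rule hb_okD(5)[OF M phi]) fact
  qed
  have bd: "\<bar>\<phi> x\<bar> \<le> N x" if "x \<in> V" for x
  proof -
    have "\<phi> x \<le> N x" using hb_okD(6)[OF M phi[OF that]] .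
    moreover have "- \<phi> x \<le> N x"
    proof -
      have "\<phi> ((-1) *\<^sub>R x) = (-1) * \<phi> x" using lin that unfolding lin_on_def by blast
      moreover have "\<phi> ((-1) *\<^sub>R x) \<le> N ((-1) *\<^sub>R x)"
        using hb_okD(6)[OF M phi[of "(-1) *\<^sub>R x"]] that sV by (simp only: subspace_scale)
      moreover have "N ((-1) *\<^sub>R x) = N x" using banach_onD(4)[OF B that, of "-1"] by simp
      ultimately show ?thesis by simp
    qed
    ultimately show ?thesis by simp
  qed
  show ?thesis using lin uniq[OF hb_okD(3)[OF M]] bd by blast
qed


definition ufam :: "nat set set \<Rightarrow> bool" where
  "ufam A \<longleftrightarrow> (\<forall>S\<in>A. \<forall>T. S \<subseteq> T \<longrightarrow> T \<in> A) \<and> (\<forall>S\<in>A. \<forall>T\<in>A. S \<inter> T \<in> A) \<and>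
     {} \<notin> A \<and> (\<forall>S. finite (- S) \<longrightarrow> S \<in> A)"


lemma ufamD:
  assumes "ufam A"
  shows "\<And>S T. S \<in> A \<Longrightarrow> S \<subseteq> T \<Longrightarrow> T \<in> A" "\<And>S T. S \<in> A \<Longrightarrow> T \<in> A \<Longrightarrow> S \<inter> T \<in> A"
    "{} \<notin> A" "\<And>S. finite (- S) \<Longrightarrow> S \<in> A"
  using assms unfolding ufam_def by simp_all

lemma ufam_union:
  assumes C: "C \<in> chains {A. ufam A}"
  shows "ufam ({S. finite (- S)} \<union> \<Union>C)"
proof -
  have ok: "\<And>A. A \<in> C \<Longrightarrow> ufam A" using C unfolding chains_def by blast
  have ch: "\<And>A B. A \<in> C \<Longrightarrow> B \<in> C \<Longrightarrow> A \<subseteq> B \<or> B \<subseteq> A"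
    using C unfolding chains_def chain_subset_def by blast
  show ?thesis unfolding ufam_def
  proof (intro conjI ballI allI impI)
    fix S T :: "nat set" assume S: "S \<in> {S. finite (- S)} \<union> \<Union> C" and ST: "S \<subseteq> T"
    show "T \<in> {S. finite (- S)} \<union> \<Union> C"
    proof (cases "finite (- S)")
      case True have "- T \<subseteq> - S" using ST by blast
      then have "finite (- T)" using True by (rule finite_subset)
      then show ?thesis by blast
    next
      case False then obtain A where "A \<in> C" "S \<in> A" using S by blast
      then show ?thesis using ufamD(1)[OF ok[of A]] ST by blast
    qed
  next
    fix S T :: "nat set" assume S: "S \<in> {S. finite (- S)} \<union> \<Union> C" and T: "T \<in> {S. finite (- S)} \<union> \<Union> C"
    show "S \<inter> T \<in> {S. finite (- S)} \<union> \<Union> C"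
    proof (cases "finite (- S)"; cases "finite (- T)")
      assume "finite (- S)" "finite (- T)" then show ?thesis by (simp add: Compl_Int)
    next
      assume fS: "finite (- S)" "infinite (- T)"
      then obtain A where A: "A \<in> C" "T \<in> A" using T by blast
      then have "S \<in> A" using ufamD(4)[OF ok[of A]] fS by blast
      then show ?thesis using A ufamD(2)[OF ok[of A]] by blast
    next
      assume fT: "infinite (- S)" "finite (- T)"
      then obtain A where A: "A \<in> C" "S \<in> A" using S by blast
      then have "T \<in> A" using ufamD(4)[OF ok[of A]] fT by blast
      then show ?thesis using A ufamD(2)[OF ok[of A]] by blast
    next
      assume "infinite (- S)" "infinite (- T)"
      then obtain A B where AB: "A \<in> C" "S \<in> A" "B \<in> C" "T \<in> B" using S T by blast
      show ?thesis
      proof (cases "A \<subseteq> B")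
        case True then show ?thesis using AB ufamD(2)[OF ok[of B]] by blast
      next
        case False then have "B \<subseteq> A" using ch AB by blast
        then show ?thesis using AB ufamD(2)[OF ok[of A]] by blast
      qed
    qed
  next
    show "{} \<notin> {S. finite (- S)} \<union> \<Union> C" using ufamD(3)[OF ok] by auto
  next
    fix S :: "nat set" assume "finite (- S)" then show "S \<in> {S. finite (- S)} \<union> \<Union> C" by blast
  qed
qed

lemma exists_ultrafilter:
  "\<exists>U :: nat filter. U \<noteq> bot \<and> U \<le> sequentially \<and> (\<forall>P. eventually P U \<or> eventually (\<lambda>x. \<not> P x) U)"
proof -
  have "\<forall>C\<in>chains {A. ufam A}. \<exists>U\<in>{A. ufam A}. \<forall>X\<in>C. X \<subseteq> U"
  proof
    fix C assume C: "C \<in> chains {A. ufam A}"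
    show "\<exists>U\<in>{A. ufam A}. \<forall>X\<in>C. X \<subseteq> U"
    proof (rule bexI[of _ "{S. finite (- S)} \<union> \<Union>C"])
      show "\<forall>X\<in>C. X \<subseteq> {S. finite (- S)} \<union> \<Union>C" by (intro ballI Un_upper2[THEN subset_trans[rotated]] Union_upper)
      show "{S. finite (- S)} \<union> \<Union>C \<in> {A. ufam A}" using ufam_union[OF C] by simp
    qed
  qed
  from Zorn_Lemma2[OF this] obtain M where M: "ufam M"
    and max: "\<And>X. ufam X \<Longrightarrow> M \<subseteq> X \<Longrightarrow> X = M" by blast
  have ultra: "S \<in> M \<or> - S \<in> M" for S
  proof (rule ccontr)
    assume nS: "\<not> (S \<in> M \<or> - S \<in> M)"
    define M' where "M' = {T. \<exists>R\<in>M. R \<inter> S \<subseteq> T}"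
    have "ufam M'" unfolding ufam_def
    proof (intro conjI ballI allI impI)
      fix R T :: "nat set" assume "R \<in> M'" "R \<subseteq> T" then show "T \<in> M'" unfolding M'_def by blast
    next
      fix R T :: "nat set" assume "R \<in> M'" "T \<in> M'"
      then obtain R1 R2 where "R1 \<in> M" "R1 \<inter> S \<subseteq> R" "R2 \<in> M" "R2 \<inter> S \<subseteq> T" unfolding M'_def by blast
      moreover then have "R1 \<inter> R2 \<in> M" using ufamD(2)[OF M] by blast
      ultimately show "R \<inter> T \<in> M'" unfolding M'_def by blast
    next
      show "{} \<notin> M'"
      proof
        assume "{} \<in> M'"
        then obtain R where "R \<in> M" "R \<inter> S \<subseteq> {}" unfolding M'_def by blast
        then have "R \<subseteq> - S" by blast
        then show False using ufamD(1)[OF M] nS \<open>R \<in> M\<close> by blast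
      qed
    next
      fix T :: "nat set" assume "finite (- T)" then have "T \<in> M" using ufamD(4)[OF M] by blast
      then show "T \<in> M'" unfolding M'_def by blast
    qed
    moreover have "M \<subseteq> M'" unfolding M'_def by blast
    moreover have "UNIV \<in> M" using ufamD(4)[OF M] by simp
    then have "S \<in> M'" unfolding M'_def by blast
    ultimately have "M' = M" using max by blast
    then show False using \<open>S \<in> M'\<close> nS by blast
  qed
  define U where "U = Inf (principal ` M)"
  have ev: "eventually P U \<longleftrightarrow> (\<exists>S\<in>M. \<forall>x\<in>S. P x)" for P
  proof -
    have "UNIV \<in> M" using ufamD(4)[OF M] by simp
    then have ne: "principal ` M \<noteq> {}" by blast
    have "eventually P U \<longleftrightarrow> (\<exists>b\<in>principal ` M. eventually P b)"
      unfolding U_def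
    proof (rule eventually_Inf_base[OF ne])
      fix F G assume "F \<in> principal ` M" "G \<in> principal ` M"
      then obtain S T where "S \<in> M" "T \<in> M" "F = principal S" "G = principal T" by blast
      moreover then have "S \<inter> T \<in> M" using ufamD(2)[OF M] by blast
      ultimately show "\<exists>x\<in>principal ` M. x \<le> inf F G"
        by (intro bexI[of _ "principal (S \<inter> T)"]) auto
    qed
    then show ?thesis by (simp add: eventually_principal)
  qed
  have h1: "U \<noteq> bot"
  proof
    assume "U = bot"
    then have "eventually (\<lambda>_. False) U" by simp
    then obtain S where "S \<in> M" "\<forall>x\<in>S. False" unfolding ev by blast
    then have "{} \<in> M" by (metis equals0I)
    then show False using ufamD(3)[OF M] by blast
  qed
  have h2: "U \<le> sequentially"
  proof (rule filter_leI)
    fix P assume "eventually P sequentially"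
    then obtain k where k: "\<And>n. n \<ge> k \<Longrightarrow> P n" by (auto simp: eventually_sequentially)
    have "finite (- {k..})" by (simp add: Compl_atLeast)
    then have "{k..} \<in> M" using ufamD(4)[OF M] by blast
    moreover have "\<forall>x\<in>{k..}. P x" using k by simp
    ultimately show "eventually P U" unfolding ev by blast
  qed
  have h3: "eventually P U \<or> eventually (\<lambda>x. \<not> P x) U" for P
  proof (cases "{x. P x} \<in> M")
    case True then show ?thesis unfolding ev by (intro disjI1 bexI[of _ "{x. P x}"]) auto
  next
    case False then have "- {x. P x} \<in> M" using ultra by blast
    then show ?thesis unfolding ev by (intro disjI2 bexI[of _ "- {x. P x}"]) auto
  qed
  show ?thesis using h1 h2 h3 by (intro exI[of _ U]) simp
qed

lemma ultra_lim_exists: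
  fixes U :: "nat filter" and x :: "nat \<Rightarrow> real"
  assumes U: "U \<noteq> bot" "\<And>P. eventually P U \<or> eventually (\<lambda>x. \<not> P x) U"
    and bd: "eventually (\<lambda>m. \<bar>x m\<bar> \<le> K) U"
  shows "\<exists>L. (x \<longlongrightarrow> L) U"
proof -
  have "compact {-K..K}" by simp
  moreover have "filtermap x U \<noteq> bot" using U(1) by (simp add: filtermap_bot_iff)
  moreover have "eventually (\<lambda>y. y \<in> {-K..K}) (filtermap x U)"
    using bd unfolding eventually_filtermap by (rule eventually_mono) auto
  ultimately obtain L where L: "inf (nhds L) (filtermap x U) \<noteq> bot"
    using iffD1[OF compact_filter, rule_format, of "{-K..K}" "filtermap x U"] by auto
  have "(x \<longlongrightarrow> L) U"
    unfolding tendsto_def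
  proof (intro allI impI)
    fix S :: "real set" assume S: "open S" "L \<in> S"
    show "eventually (\<lambda>m. x m \<in> S) U"
    proof (rule ccontr)
      assume "\<not> eventually (\<lambda>m. x m \<in> S) U"
      then have "eventually (\<lambda>m. x m \<notin> S) U" using U(2)[of "\<lambda>m. x m \<in> S"] by simp
      then have a: "eventually (\<lambda>y. y \<notin> S) (filtermap x U)" by (simp add: eventually_filtermap)
      have b: "eventually (\<lambda>y. y \<in> S) (nhds L)" using S by (rule eventually_nhds_in_open)
      have "eventually (\<lambda>_. False) (inf (nhds L) (filtermap x U))"
        unfolding eventually_inf by (intro exI[of _ "\<lambda>y. y \<in> S"] exI[of _ "\<lambda>y. y \<notin> S"] conjI b a) simp
      then show False using L unfolding trivial_limit_def by simp
    qed
  qed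
  then show ?thesis by blast
qed


lemma dual_bound:
  assumes B: "banach_on V N" and psi: "\<psi> \<in> dual_on V N" and x: "x \<in> V"
  shows "\<bar>\<psi> x\<bar> \<le> dual_norm V N \<psi> * N x \<and> 0 \<le> dual_norm V N \<psi>"
proof -
  note sV = banach_onD(1)[OF B]
  have lin: "lin_on V \<psi>" and zero_out: "\<forall>x. x \<notin> V \<longrightarrow> \<psi> x = 0" using psi unfolding dual_on_def by auto
  obtain C where C: "\<forall>x\<in>V. \<bar>\<psi> x\<bar> \<le> C * N x" using psi unfolding dual_on_def by auto
  define S where "S = {\<bar>\<psi> x\<bar> | x. x \<in> V \<and> N x \<le> 1}"
  have bdd: "bdd_above S"
  proof (rule bdd_aboveI[of _ "max C 0"])
    fix z assume "z \<in> S"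
    then obtain y where y: "z = \<bar>\<psi> y\<bar>" "y \<in> V" "N y \<le> 1" unfolding S_def by blast
    have "0 \<le> N y" using banach_onD(2)[OF B y(2)] .
    then have "C * N y \<le> max C 0" using y(3)
      by (cases "C \<ge> 0") (auto intro: mult_left_le order_trans[OF mult_nonpos_nonneg])
    then show "z \<le> max C 0" using C y by fastforce
  qed
  have psi0: "\<psi> 0 = 0" using lin subspace_0[OF sV] unfolding lin_on_def
    by (metis mult_zero_left scale_zero_left)
  have "\<bar>\<psi> 0\<bar> \<in> S" unfolding S_def using subspace_0[OF sV] banach_onD(3)[OF B subspace_0[OF sV]] by force
  then have nn: "0 \<le> dual_norm V N \<psi>" unfolding dual_norm_def S_def[symmetric] using psi0
    by (metis abs_zero cSup_upper[OF _ bdd])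
  have "\<bar>\<psi> x\<bar> \<le> dual_norm V N \<psi> * N x"
  proof (cases "N x = 0")
    case True then have "x = 0" using banach_onD(3)[OF B x] by simp
    then show ?thesis using psi0 True by simp
  next
    case False
    then have pos: "N x > 0" using banach_onD(2)[OF B x] by simp
    define z where "z = (1 / N x) *\<^sub>R x"
    have zV: "z \<in> V" unfolding z_def using x sV by (rule subspace_scale[rotated])
    have Nz: "N z = 1" unfolding z_def using banach_onD(4)[OF B x, of "1 / N x"] pos by simp
    have "\<bar>\<psi> z\<bar> \<in> S" unfolding S_def using zV Nz by auto
    then have le: "\<bar>\<psi> z\<bar> \<le> dual_norm V N \<psi>" unfolding dual_norm_def S_def[symmetric]
      by (rule cSup_upper[OF _ bdd])
    have "\<psi> z = \<psi> x / N x" unfolding z_def using lin x unfolding lin_on_def by simp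
    then have "\<bar>\<psi> x\<bar> / N x \<le> dual_norm V N \<psi>" using le pos by (simp add: abs_divide)
    then show ?thesis using pos by (simp add: divide_le_eq)
  qed
  then show ?thesis using nn by simp
qed

locale fsetting =
  fixes X :: "nat \<Rightarrow> 'a::real_vector set"
    and N :: "nat \<Rightarrow> 'a \<Rightarrow> real"
    and g :: "nat \<Rightarrow> 'a \<Rightarrow> real"
  assumes banach: "\<And>s. banach_on (X s) (N s)"
    and refl: "\<And>s. reflexive_on (X s) (N s)"
    and nested: "\<And>s. X (Suc s) \<subseteq> X s"
    and norm_mono: "\<And>s x. x \<in> X (Suc s) \<Longrightarrow> N s x \<le> N (Suc s) x"
    and dense: "\<And>s x e. x \<in> X s \<Longrightarrow> e > 0 \<Longrightarrow> \<exists>y\<in>(\<Inter>t. X t). N s (x - y) < e"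
    and g_dual: "\<And>i. lin_on (X 0) (g i) \<and> (\<exists>C. \<forall>x\<in>X 0. \<bar>g i x\<bar> \<le> C * N 0 x)"
    and g_nz: "\<And>i. \<exists>x\<in>X 0. g i x \<noteq> 0"
    and A1: "\<And>s. condA1 X N g s"
begin

abbreviation "M s c \<equiv> Mset X g s c"
abbreviation "Th s \<equiv> Theta X g s"
abbreviation "nr s \<equiv> Theta_norm X N g s"

lemma sub: "subspace (X s)" using banach_onD(1)[OF banach] .

lemma X_mono: "s \<le> t \<Longrightarrow> X t \<subseteq> X s"
proof (induction t)
  case 0 then show ?case by simp
next
  case (Suc t) then show ?case using nested[of t] by (cases "s = Suc t") auto
qed

lemma N_mono: "s \<le> t \<Longrightarrow> x \<in> X t \<Longrightarrow> N s x \<le> N t x"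
proof (induction t)
  case 0 then show ?case by simp
next
  case (Suc t)
  show ?case
  proof (cases "s = Suc t")
    case True then show ?thesis by simp
  next
    case False
    then have "s \<le> t" using Suc by simp
    moreover have "x \<in> X t" using nested Suc by blast
    ultimately have "N s x \<le> N t x" using Suc by blast
    also have "\<dots> \<le> N (Suc t) x" using norm_mono Suc by blast
    finally show ?thesis .
  qed
qed

lemma X0: "x \<in> X s \<Longrightarrow> x \<in> X 0" using X_mono[of 0 s] by blast

lemma N_nonneg: "x \<in> X s \<Longrightarrow> 0 \<le> N s x" using banach_onD(2)[OF banach] by blast

definition Cg :: "nat \<Rightarrow> real" where
  "Cg i = (SOME C. C > 0 \<and> (\<forall>x\<in>X 0. \<bar>g i x\<bar> \<le> C * N 0 x))"

lemma Cg: "Cg i > 0 \<and> (\<forall>x\<in>X 0. \<bar>g i x\<bar> \<le> Cg i * N 0 x)"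
proof -
  obtain C where C: "\<forall>x\<in>X 0. \<bar>g i x\<bar> \<le> C * N 0 x" using g_dual by blast
  have "\<bar>C\<bar> + 1 > 0 \<and> (\<forall>x\<in>X 0. \<bar>g i x\<bar> \<le> (\<bar>C\<bar> + 1) * N 0 x)"
  proof (intro conjI ballI)
    fix x assume x: "x \<in> X 0"
    have "C * N 0 x \<le> (\<bar>C\<bar> + 1) * N 0 x" using N_nonneg[OF x] by (intro mult_right_mono) auto
    then show "\<bar>g i x\<bar> \<le> (\<bar>C\<bar> + 1) * N 0 x" using C x by fastforce
  qed simp
  then show ?thesis unfolding Cg_def by (rule someI)
qed

lemma g_bound: "x \<in> X s \<Longrightarrow> \<bar>g i x\<bar> \<le> Cg i * N s x"
proof -
  assume x: "x \<in> X s"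
  have "\<bar>g i x\<bar> \<le> Cg i * N 0 x" using Cg X0[OF x] by blast
  also have "\<dots> \<le> Cg i * N s x" using N_mono[OF _ x, of 0] Cg[of i] by (intro mult_left_mono) auto
  finally show ?thesis .
qed

lemma g_add: "x \<in> X s \<Longrightarrow> y \<in> X s \<Longrightarrow> g i (x + y) = g i x + g i y"
  using g_dual[of i] X0 unfolding lin_on_def by blast

lemma g_scale: "x \<in> X s \<Longrightarrow> g i (a *\<^sub>R x) = a * g i x"
  using g_dual[of i] X0 unfolding lin_on_def by blast

lemma g_diff: "x \<in> X s \<Longrightarrow> y \<in> X s \<Longrightarrow> g i (x - y) = g i x - g i y"
proof -
  assume x: "x \<in> X s" and y: "y \<in> X s"
  have "(-1) *\<^sub>R y \<in> X s" using y sub by (rule subspace_scale[rotated])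
  then have "g i (x + (-1) *\<^sub>R y) = g i x + g i ((-1) *\<^sub>R y)" using g_add x by blast
  also have "g i ((-1) *\<^sub>R y) = - g i y" using g_scale[OF y, of i "-1"] by simp
  finally show ?thesis by simp
qed

lemma M_D: "f \<in> M s c \<Longrightarrow> f \<in> X s" "f \<in> M s c \<Longrightarrow> \<bar>c i\<bar> \<le> \<bar>g i f\<bar>"
  unfolding Mset_def by auto

lemma M_I: "f \<in> X s \<Longrightarrow> (\<And>i. \<bar>c i\<bar> \<le> \<bar>g i f\<bar>) \<Longrightarrow> f \<in> M s c"
  unfolding Mset_def by auto

lemma Th_iff: "c \<in> Th s \<longleftrightarrow> M s c \<noteq> {}" unfolding Theta_def by simp

lemma Th_I: "f \<in> M s c \<Longrightarrow> c \<in> Th s" unfolding Theta_def by blast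

lemma nr_bdd: "bdd_below (N s ` M s c)"
  by (rule bdd_belowI[of _ 0]) (auto dest: M_D(1) N_nonneg)

lemma nr_le: "f \<in> M s c \<Longrightarrow> nr s c \<le> N s f"
  unfolding Theta_norm_def by (rule cInf_lower[OF imageI nr_bdd])

lemma nr_ge: "c \<in> Th s \<Longrightarrow> (\<And>f. f \<in> M s c \<Longrightarrow> a \<le> N s f) \<Longrightarrow> a \<le> nr s c"
  unfolding Theta_norm_def Th_iff by (rule cInf_greatest) auto

lemma nr_nonneg: "c \<in> Th s \<Longrightarrow> 0 \<le> nr s c"
  by (rule nr_ge) (auto dest: M_D(1) N_nonneg)

lemma nr_less: "c \<in> Th s \<Longrightarrow> nr s c < e \<Longrightarrow> \<exists>f\<in>M s c. N s f < e"
  unfolding Theta_norm_def Th_iff using cInf_lessD[of "N s ` M s c" e] by auto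

lemma coord: "c \<in> Th s \<Longrightarrow> \<bar>c i\<bar> \<le> Cg i * nr s c"
proof -
  assume c: "c \<in> Th s"
  have pos: "Cg i > 0" using Cg by blast
  have "\<bar>c i\<bar> / Cg i \<le> nr s c"
  proof (rule nr_ge[OF c])
    fix f assume f: "f \<in> M s c"
    have "\<bar>c i\<bar> \<le> Cg i * N s f" using M_D(2)[OF f, of i] g_bound[OF M_D(1)[OF f], of i] by linarith
    then show "\<bar>c i\<bar> / Cg i \<le> N s f" using pos by (simp add: divide_le_eq mult.commute)
  qed
  then show ?thesis using pos by (simp add: divide_le_eq mult.commute)
qed

lemma zero_in: "0 \<in> X s" using sub by (rule subspace_0)

lemma zero_Th: "(\<lambda>i. 0) \<in> Th s" "nr s (\<lambda>i. 0) = 0"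
proof -
  have z: "0 \<in> M s (\<lambda>i. 0)" by (rule M_I[OF zero_in]) simp
  then show "(\<lambda>i. 0) \<in> Th s" by (rule Th_I)
  have "nr s (\<lambda>i. 0) \<le> N s 0" by (rule nr_le[OF z])
  also have "N s 0 = 0" using banach_onD(3)[OF banach zero_in] by simp
  finally show "nr s (\<lambda>i. 0) = 0" using nr_nonneg[OF \<open>(\<lambda>i. 0) \<in> Th s\<close>] by simp
qed

lemma scale_le:
  assumes c: "c \<in> Th s" and a: "a \<noteq> 0"
  shows "(\<lambda>i. a * c i) \<in> Th s \<and> nr s (\<lambda>i. a * c i) \<le> \<bar>a\<bar> * nr s c"
proof -
  have mem: "a *\<^sub>R f \<in> M s (\<lambda>i. a * c i)" if f: "f \<in> M s c" for f
  proof (rule M_I)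
    show "a *\<^sub>R f \<in> X s" using M_D(1)[OF f] sub by (rule subspace_scale[rotated])
    fix i show "\<bar>a * c i\<bar> \<le> \<bar>g i (a *\<^sub>R f)\<bar>"
      using M_D(2)[OF f, of i] g_scale[OF M_D(1)[OF f], of i a] by (simp add: abs_mult mult_left_mono)
  qed
  obtain f0 where "f0 \<in> M s c" using c Th_iff by blast
  then have th: "(\<lambda>i. a * c i) \<in> Th s" using mem Th_I by blast
  have "nr s (\<lambda>i. a * c i) / \<bar>a\<bar> \<le> nr s c"
  proof (rule nr_ge[OF c])
    fix f assume f: "f \<in> M s c"
    have "nr s (\<lambda>i. a * c i) \<le> N s (a *\<^sub>R f)" by (rule nr_le[OF mem[OF f]])
    also have "\<dots> = \<bar>a\<bar> * N s f" using banach_onD(4)[OF banach M_D(1)[OF f]] .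
    finally show "nr s (\<lambda>i. a * c i) / \<bar>a\<bar> \<le> N s f" using a by (simp add: divide_le_eq mult.commute)
  qed
  then show ?thesis using th a by (simp add: divide_le_eq mult.commute)
qed

lemma scale:
  assumes c: "c \<in> Th s"
  shows "(\<lambda>i. a * c i) \<in> Th s" "nr s (\<lambda>i. a * c i) = \<bar>a\<bar> * nr s c"
proof -
  show "(\<lambda>i. a * c i) \<in> Th s" using scale_le[OF c] zero_Th by (cases "a = 0") auto
  show "nr s (\<lambda>i. a * c i) = \<bar>a\<bar> * nr s c"
  proof (cases "a = 0")
    case True then show ?thesis using zero_Th by simp
  next
    case False
    have 1: "nr s (\<lambda>i. a * c i) \<le> \<bar>a\<bar> * nr s c" using scale_le[OF c False] by blast
    have "(\<lambda>i. a * c i) \<in> Th s" using scale_le[OF c False] by blast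
    from scale_le[OF this, of "1/a"] False
    have "nr s c \<le> \<bar>1/a\<bar> * nr s (\<lambda>i. a * c i)" by simp
    then have "\<bar>a\<bar> * nr s c \<le> nr s (\<lambda>i. a * c i)" using False
      by (simp add: field_simps abs_divide)
    then show ?thesis using 1 by simp
  qed
qed

lemma add:
  assumes c: "c \<in> Th s" and d: "d \<in> Th s"
  shows "(\<lambda>i. c i + d i) \<in> Th s" "nr s (\<lambda>i. c i + d i) \<le> nr s c + nr s d"
proof -
  have A: "\<exists>r\<in>M s (\<lambda>i. c i + d i). N s r \<le> N s f + N s h" if "f \<in> M s c" "h \<in> M s d" for f h
    using A1[of s] c d that unfolding condA1_def by blast
  obtain f0 h0 where "f0 \<in> M s c" "h0 \<in> M s d" using c d Th_iff by blast
  then show th: "(\<lambda>i. c i + d i) \<in> Th s" using A Th_I by blast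
  have "nr s (\<lambda>i. c i + d i) - nr s d \<le> nr s c"
  proof (rule nr_ge[OF c])
    fix f assume f: "f \<in> M s c"
    have "nr s (\<lambda>i. c i + d i) - N s f \<le> nr s d"
    proof (rule nr_ge[OF d])
      fix h assume h: "h \<in> M s d"
      obtain r where r: "r \<in> M s (\<lambda>i. c i + d i)" "N s r \<le> N s f + N s h" using A[OF f h] by blast
      show "nr s (\<lambda>i. c i + d i) - N s f \<le> N s h" using nr_le[OF r(1)] r(2) by simp
    qed
    then show "nr s (\<lambda>i. c i + d i) - nr s d \<le> N s f" by simp
  qed
  then show "nr s (\<lambda>i. c i + d i) \<le> nr s c + nr s d" by simp
qed

lemma diff_Th: "c \<in> Th s \<Longrightarrow> d \<in> Th s \<Longrightarrow> (\<lambda>i. c i - d i) \<in> Th s"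
  using add(1)[of c s "\<lambda>i. (-1) * d i"] scale(1)[of d s "-1"] by simp

lemma nr_swap: "c \<in> Th s \<Longrightarrow> d \<in> Th s \<Longrightarrow> nr s (\<lambda>i. c i - d i) = nr s (\<lambda>i. d i - c i)"
  using scale(2)[OF diff_Th[of d s c], of "-1"] by simp

lemma weak_limit:
  fixes U :: "nat filter"
  assumes U: "U \<noteq> bot" "U \<le> sequentially" "\<And>P. eventually P U \<or> eventually (\<lambda>x. \<not> P x) U"
    and r: "\<And>m. r m \<in> X s" and rb: "eventually (\<lambda>m. N s (r m) \<le> B) sequentially" and B: "0 \<le> B"
  shows "\<exists>y\<in>X s. N s y \<le> B \<and> (\<forall>i. ((\<lambda>m. g i (r m)) \<longlongrightarrow> g i y) U)"
proof -
  note BB = banach[of s]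
  have rbU: "eventually (\<lambda>m. N s (r m) \<le> B) U" using filter_leD[OF U(2) rb] .
  define \<Phi> where "\<Phi> \<psi> = Lim U (\<lambda>m. \<psi> (r m))" for \<psi> :: "'a \<Rightarrow> real"
  have conv: "((\<lambda>m. \<psi> (r m)) \<longlongrightarrow> \<Phi> \<psi>) U" if psi: "\<psi> \<in> dual_on (X s) (N s)" for \<psi>
  proof -
    have ev: "eventually (\<lambda>m. \<bar>\<psi> (r m)\<bar> \<le> dual_norm (X s) (N s) \<psi> * B) U"
      using rbU
    proof (rule eventually_mono)
      fix m assume "N s (r m) \<le> B"
      moreover have "0 \<le> dual_norm (X s) (N s) \<psi>" using dual_bound[OF BB psi r[of m]] by blast
      ultimately show "\<bar>\<psi> (r m)\<bar> \<le> dual_norm (X s) (N s) \<psi> * B"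
        using dual_bound[OF BB psi r[of m]] by (meson mult_left_mono order_trans)
    qed
    then obtain L where L: "((\<lambda>m. \<psi> (r m)) \<longlongrightarrow> L) U"
      using ultra_lim_exists[OF U(1) U(3) ev] by blast
    then have "\<Phi> \<psi> = L" unfolding \<Phi>_def using U(1) by (intro tendsto_Lim) auto
    then show ?thesis using L by simp
  qed
  have "\<exists>y\<in>X s. \<forall>\<phi>\<in>dual_on (X s) (N s). \<Phi> \<phi> = \<phi> y"
  proof (rule refl[of s, unfolded reflexive_on_def, rule_format], intro conjI ballI allI)
    fix \<phi> \<psi> assume p: "\<phi> \<in> dual_on (X s) (N s)" "\<psi> \<in> dual_on (X s) (N s)"
    have "((\<lambda>m. \<phi> (r m) + \<psi> (r m)) \<longlongrightarrow> \<Phi> \<phi> + \<Phi> \<psi>) U" using conv[OF p(1)] conv[OF p(2)] by (rule tendsto_add)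
    then show "\<Phi> (\<lambda>x. \<phi> x + \<psi> x) = \<Phi> \<phi> + \<Phi> \<psi>" unfolding \<Phi>_def using U(1) by (intro tendsto_Lim) auto
  next
    fix a and \<phi> assume p: "\<phi> \<in> dual_on (X s) (N s)"
    have "((\<lambda>m. a * \<phi> (r m)) \<longlongrightarrow> a * \<Phi> \<phi>) U" using conv[OF p] by (rule tendsto_mult_left)
    then show "\<Phi> (\<lambda>x. a * \<phi> x) = a * \<Phi> \<phi>" unfolding \<Phi>_def using U(1) by (intro tendsto_Lim) auto
  next
    show "\<exists>C. \<forall>\<phi>\<in>dual_on (X s) (N s). \<bar>\<Phi> \<phi>\<bar> \<le> C * dual_norm (X s) (N s) \<phi>"
    proof (intro exI[of _ B] ballI)
      fix \<phi> assume p: "\<phi> \<in> dual_on (X s) (N s)"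
      have "((\<lambda>m. \<bar>\<phi> (r m)\<bar>) \<longlongrightarrow> \<bar>\<Phi> \<phi>\<bar>) U" using conv[OF p] by (rule tendsto_rabs)
      moreover have "eventually (\<lambda>m. \<bar>\<phi> (r m)\<bar> \<le> B * dual_norm (X s) (N s) \<phi>) U"
        using rbU
      proof (rule eventually_mono)
        fix m assume "N s (r m) \<le> B"
        moreover have "0 \<le> dual_norm (X s) (N s) \<phi>" using dual_bound[OF BB p r[of m]] by blast
        ultimately show "\<bar>\<phi> (r m)\<bar> \<le> B * dual_norm (X s) (N s) \<phi>"
          using dual_bound[OF BB p r[of m]] by (metis mult.commute mult_left_mono order_trans)
      qed
      ultimately show "\<bar>\<Phi> \<phi>\<bar> \<le> B * dual_norm (X s) (N s) \<phi>" using U(1) by (rule tendsto_upperbound)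
    qed
  qed
  then obtain y where y: "y \<in> X s" and yP: "\<And>\<phi>. \<phi> \<in> dual_on (X s) (N s) \<Longrightarrow> \<Phi> \<phi> = \<phi> y" by blast
  have gconv: "((\<lambda>m. g i (r m)) \<longlongrightarrow> g i y) U" for i
  proof -
    define g' where "g' x = (if x \<in> X s then g i x else 0)" for x
    have "g' \<in> dual_on (X s) (N s)" unfolding dual_on_def lin_on_def
    proof (intro CollectI conjI ballI allI impI exI[of _ "Cg i"])
      fix x y assume "x \<in> X s" "y \<in> X s"
      then show "g' (x + y) = g' x + g' y" unfolding g'_def using g_add subspace_add[OF sub] by simp
    next
      fix a x assume "x \<in> X s"
      then show "g' (a *\<^sub>R x) = a * g' x" unfolding g'_def using g_scale subspace_scale[OF sub] by simp
    next
      fix x assume "x \<in> X s" then show "\<bar>g' x\<bar> \<le> Cg i * N s x" unfolding g'_def using g_bound by simp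
    next
      fix x assume "x \<notin> X s" then show "g' x = 0" unfolding g'_def by simp
    qed
    from conv[OF this] yP[OF this] show ?thesis using r y unfolding g'_def by simp
  qed
  obtain \<phi>0 where p0: "lin_on (X s) \<phi>0" "\<phi>0 y = N s y" "\<And>x. x \<in> X s \<Longrightarrow> \<bar>\<phi>0 x\<bar> \<le> N s x"
    using hahn_banach_norming[OF BB y] by blast
  define \<phi>1 where "\<phi>1 x = (if x \<in> X s then \<phi>0 x else 0)" for x
  have p1: "\<phi>1 \<in> dual_on (X s) (N s)" unfolding dual_on_def lin_on_def
  proof (intro CollectI conjI ballI allI impI exI[of _ 1])
    fix x y assume "x \<in> X s" "y \<in> X s"
    then show "\<phi>1 (x + y) = \<phi>1 x + \<phi>1 y" unfolding \<phi>1_def using p0(1) subspace_add[OF sub]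
      unfolding lin_on_def by simp
  next
    fix a x assume "x \<in> X s"
    then show "\<phi>1 (a *\<^sub>R x) = a * \<phi>1 x" unfolding \<phi>1_def using p0(1) subspace_scale[OF sub]
      unfolding lin_on_def by simp
  next
    fix x assume "x \<in> X s" then show "\<bar>\<phi>1 x\<bar> \<le> 1 * N s x" unfolding \<phi>1_def using p0(3) by simp
  next
    fix x assume "x \<notin> X s" then show "\<phi>1 x = 0" unfolding \<phi>1_def by simp
  qed
  have "\<Phi> \<phi>1 = N s y" using yP[OF p1] p0(2) y unfolding \<phi>1_def by simp
  moreover have "\<Phi> \<phi>1 \<le> B"
  proof (rule tendsto_upperbound[OF conv[OF p1] _ U(1)])
    show "eventually (\<lambda>m. \<phi>1 (r m) \<le> B) U" using rbU
    proof (rule eventually_mono)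
      fix m assume "N s (r m) \<le> B" then show "\<phi>1 (r m) \<le> B" unfolding \<phi>1_def using p0(3)[OF r[of m]] r by simp
    qed
  qed
  ultimately show ?thesis using y gconv by auto
qed

lemma complete:
  assumes u: "\<And>n. u n \<in> Th s"
    and C: "\<forall>e>0. \<exists>K. \<forall>m\<ge>K. \<forall>n\<ge>K. nr s (\<lambda>i. u m i - u n i) < e"
  shows "\<exists>c\<in>Th s. (\<lambda>n. nr s (\<lambda>i. u n i - c i)) \<longlonglongrightarrow> 0"
proof -
  obtain U :: "nat filter" where U: "U \<noteq> bot" "U \<le> sequentially" "\<And>P. eventually P U \<or> eventually (\<lambda>x. \<not> P x) U"
    using exists_ultrafilter by blast
  have cauchy: "Cauchy (\<lambda>n. u n i)" for i
  proof (rule metric_CauchyI)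
    fix e :: real assume e: "0 < e"
    have pos: "Cg i > 0" using Cg by blast
    obtain K where K: "\<forall>m\<ge>K. \<forall>n\<ge>K. nr s (\<lambda>i. u m i - u n i) < e / Cg i"
      using C e pos by (meson divide_pos_pos)
    show "\<exists>K. \<forall>m\<ge>K. \<forall>n\<ge>K. dist (u m i) (u n i) < e"
    proof (intro exI[of _ K] allI impI)
      fix m n assume mn: "K \<le> m" "K \<le> n"
      have "\<bar>u m i - u n i\<bar> \<le> Cg i * nr s (\<lambda>i. u m i - u n i)"
        using coord[OF diff_Th[OF u[of m] u[of n]], of i] by simp
      also have "\<dots> < Cg i * (e / Cg i)" using K mn pos by (intro mult_strict_left_mono) auto
      also have "\<dots> = e" using pos by simp
      finally show "dist (u m i) (u n i) < e" by (simp add: dist_real_def)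
    qed
  qed
  define c where "c i = lim (\<lambda>n. u n i)" for i
  have cl: "(\<lambda>n. u n i) \<longlonglongrightarrow> c i" for i
    unfolding c_def using cauchy[of i] Cauchy_convergent_iff convergent_LIMSEQ_iff by blast
  have key: "\<exists>K. \<forall>n\<ge>K. (\<lambda>i. c i - u n i) \<in> Th s \<and> nr s (\<lambda>i. c i - u n i) \<le> e" if e: "e > 0" for e
  proof -
    obtain K where K: "\<forall>m\<ge>K. \<forall>n\<ge>K. nr s (\<lambda>i. u m i - u n i) < e" using C e by blast
    show ?thesis
    proof (intro exI[of _ K] allI impI)
      fix n assume n: "K \<le> n"
      have ex: "\<exists>f. f \<in> M s (\<lambda>i. u m i - u n i) \<and> N s f < e" if m: "K \<le> m" for m
        using nr_less[OF diff_Th[OF u[of m] u[of n]], of e] K m n by blast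
      define r where "r m = (if K \<le> m then (SOME f. f \<in> M s (\<lambda>i. u m i - u n i) \<and> N s f < e) else 0)" for m
      have rM: "r m \<in> M s (\<lambda>i. u m i - u n i) \<and> N s (r m) < e" if m: "K \<le> m" for m
        unfolding r_def using m someI_ex[OF ex[OF m]] by simp
      have rX: "r m \<in> X s" for m
        using rM[of m] M_D(1) zero_in unfolding r_def by (cases "K \<le> m") auto
      have rb: "eventually (\<lambda>m. N s (r m) \<le> e) sequentially"
        using rM unfolding eventually_sequentially by (auto intro!: exI[of _ K] less_imp_le)
      obtain y where y: "y \<in> X s" "N s y \<le> e" and gy: "\<And>i. ((\<lambda>m. g i (r m)) \<longlongrightarrow> g i y) U"
        using weak_limit[OF U rX rb] e by auto
      have yM: "y \<in> M s (\<lambda>i. c i - u n i)"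
      proof (rule M_I[OF y(1)])
        fix i
        have a: "((\<lambda>m. \<bar>g i (r m)\<bar>) \<longlongrightarrow> \<bar>g i y\<bar>) U" using gy[of i] by (rule tendsto_rabs)
        have "((\<lambda>m. \<bar>u m i - u n i\<bar>) \<longlongrightarrow> \<bar>c i - u n i\<bar>) sequentially"
          using cl[of i] by (intro tendsto_rabs tendsto_diff) auto
        then have b: "((\<lambda>m. \<bar>u m i - u n i\<bar>) \<longlongrightarrow> \<bar>c i - u n i\<bar>) U" using U(2) by (rule tendsto_mono[rotated])
        have "eventually (\<lambda>m. \<bar>u m i - u n i\<bar> \<le> \<bar>g i (r m)\<bar>) sequentially"
          unfolding eventually_sequentially using rM M_D(2) by blast
        then have ev: "eventually (\<lambda>m. \<bar>u m i - u n i\<bar> \<le> \<bar>g i (r m)\<bar>) U" using filter_leD[OF U(2)] by blast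
        show "\<bar>c i - u n i\<bar> \<le> \<bar>g i y\<bar>" using tendsto_le[OF U(1) a b ev] .
      qed
      then have th: "(\<lambda>i. c i - u n i) \<in> Th s" by (rule Th_I)
      have "nr s (\<lambda>i. c i - u n i) \<le> e" using nr_le[OF yM] y(2) by simp
      then show "(\<lambda>i. c i - u n i) \<in> Th s \<and> nr s (\<lambda>i. c i - u n i) \<le> e" using th by simp
    qed
  qed
  obtain M1 where "\<forall>n\<ge>M1. (\<lambda>i. c i - u n i) \<in> Th s \<and> nr s (\<lambda>i. c i - u n i) \<le> 1" using key[of 1] by auto
  then have "(\<lambda>i. c i - u M1 i) \<in> Th s" by simp
  from add(1)[OF this u[of M1]] have cT: "c \<in> Th s" by simp
  have "(\<lambda>n. nr s (\<lambda>i. u n i - c i)) \<longlonglongrightarrow> 0"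
    unfolding LIMSEQ_iff
  proof (intro allI impI)
    fix r :: real assume r: "r > 0"
    obtain K where K: "\<forall>n\<ge>K. (\<lambda>i. c i - u n i) \<in> Th s \<and> nr s (\<lambda>i. c i - u n i) \<le> r/2"
      using key[of "r/2"] r by auto
    show "\<exists>no. \<forall>n\<ge>no. norm (nr s (\<lambda>i. u n i - c i) - 0) < r"
    proof (intro exI[of _ K] allI impI)
      fix n assume n: "K \<le> n"
      have "nr s (\<lambda>i. u n i - c i) = nr s (\<lambda>i. c i - u n i)" using nr_swap[OF u cT] by simp
      moreover have "0 \<le> nr s (\<lambda>i. u n i - c i)" using nr_nonneg[OF diff_Th[OF u cT]] .
      ultimately show "norm (nr s (\<lambda>i. u n i - c i) - 0) < r" using K n r by auto
    qed
  qed
  then show ?thesis using cT by blast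
qed


lemma banach_seq: "banach_seq_space (Th s) (nr s)"
  unfolding banach_seq_space_def
proof (intro conjI ballI allI impI)
  show "(\<lambda>i. 0) \<in> Th s" by (rule zero_Th)
next
  fix c d assume "c \<in> Th s" "d \<in> Th s"
  then show "(\<lambda>i. c i + d i) \<in> Th s" "nr s (\<lambda>i. c i + d i) \<le> nr s c + nr s d" using add by auto
next
  fix a c assume "c \<in> Th s"
  then show "(\<lambda>i. a * c i) \<in> Th s" "nr s (\<lambda>i. a * c i) = \<bar>a\<bar> * nr s c" using scale by auto
next
  fix c assume c: "c \<in> Th s"
  show "0 \<le> nr s c" using nr_nonneg[OF c] .
  show "nr s c = 0 \<longleftrightarrow> c = (\<lambda>i. 0)"
  proof
    assume "nr s c = 0"
    then have "\<bar>c i\<bar> \<le> 0" for i using coord[OF c, of i] by simp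
    then show "c = (\<lambda>i. 0)" by (intro ext) (meson abs_le_zero_iff)
  next
    assume "c = (\<lambda>i. 0)" then show "nr s c = 0" using zero_Th by simp
  qed
next
  fix u :: "nat \<Rightarrow> nat \<Rightarrow> real" assume "\<forall>n. u n \<in> Th s" "\<forall>e>0. \<exists>M. \<forall>m\<ge>M. \<forall>n\<ge>M. nr s (\<lambda>i. u m i - u n i) < e"
  then show "\<exists>c\<in>Th s. (\<lambda>n. nr s (\<lambda>i. u n i - c i)) \<longlonglongrightarrow> 0" using complete by blast
qed

lemma BK: "BK_space (Th s) (nr s)"
  unfolding BK_space_def
proof (intro conjI banach_seq allI ballI impI)
  fix i c and e :: real assume c: "c \<in> Th s" and e: "0 < e"
  have pos: "Cg i > 0" using Cg by blast
  show "\<exists>\<delta>>0. \<forall>d\<in>Th s. nr s (\<lambda>j. d j - c j) < \<delta> \<longrightarrow> \<bar>d i - c i\<bar> < e"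
  proof (intro exI[of _ "e / Cg i"] conjI ballI impI)
    show "0 < e / Cg i" using pos e by simp
    fix d assume d: "d \<in> Th s" and lt: "nr s (\<lambda>j. d j - c j) < e / Cg i"
    have "\<bar>d i - c i\<bar> \<le> Cg i * nr s (\<lambda>j. d j - c j)" using coord[OF diff_Th[OF d c], of i] by simp
    also have "\<dots> < Cg i * (e / Cg i)" using lt pos by (intro mult_strict_left_mono)
    also have "\<dots> = e" using pos by simp
    finally show "\<bar>d i - c i\<bar> < e" .
  qed
qed

lemma solid: "solid (Th s) (nr s)"
  unfolding solid_def
proof (intro ballI allI impI conjI)
  fix c d assume c: "c \<in> Th s" and cd: "\<forall>i. \<bar>d i\<bar> \<le> \<bar>c i\<bar>"
  have sub: "M s c \<subseteq> M s d" using cd by (auto intro!: M_I dest: M_D intro: order_trans)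
  then show "d \<in> Th s" using c Th_iff by blast
  show "nr s d \<le> nr s c"
    by (rule nr_ge[OF c]) (rule nr_le, use sub in blast)
qed

lemma gnz_F: "\<exists>y\<in>(\<Inter>t. X t). g k y \<noteq> 0"
proof -
  obtain x where x: "x \<in> X 0" "g k x \<noteq> 0" using g_nz by blast
  have pos: "Cg k > 0" using Cg by blast
  obtain y where y: "y \<in> (\<Inter>t. X t)" "N 0 (x - y) < \<bar>g k x\<bar> / Cg k"
    using dense[OF x(1), of "\<bar>g k x\<bar> / Cg k"] x(2) pos by auto
  have y0: "y \<in> X 0" using y by blast
  have "\<bar>g k x - g k y\<bar> = \<bar>g k (x - y)\<bar>" using g_diff[OF x(1) y0] by simp
  also have "\<dots> \<le> Cg k * N 0 (x - y)" using g_bound subspace_diff[OF sub x(1) y0] by blast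
  also have "\<dots> < Cg k * (\<bar>g k x\<bar> / Cg k)" using y(2) pos by (intro mult_strict_left_mono)
  also have "\<dots> = \<bar>g k x\<bar>" using pos by simp
  finally have "g k y \<noteq> 0" by auto
  then show ?thesis using y(1) by blast
qed

lemma bessel: "bessel_seq (X s) (N s) (Th s) (nr s) g 1"
  unfolding bessel_seq_def
proof (intro ballI conjI)
  fix f assume f: "f \<in> X s"
  have "f \<in> M s (\<lambda>i. g i f)" by (rule M_I[OF f]) simp
  then show "(\<lambda>i. g i f) \<in> Th s" "nr s (\<lambda>i. g i f) \<le> 1 * N s f" using Th_I nr_le by auto
qed

lemma inter_nz: "(\<Inter>s. Th s) \<noteq> {\<lambda>i. 0}"
proof
  assume eq: "(\<Inter>s. Th s) = {\<lambda>i. 0}"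
  obtain y where y: "y \<in> (\<Inter>t. X t)" "g 0 y \<noteq> 0" using gnz_F by blast
  have "(\<lambda>i. g i y) \<in> Th s" for s using bessel[of s] y(1) unfolding bessel_seq_def by blast
  then have "(\<lambda>i. g i y) \<in> (\<Inter>s. Th s)" by blast
  then have "(\<lambda>i. g i y) = (\<lambda>i. 0)" using eq by blast
  then show False using y(2) by (metis)
qed

lemma Th_mono: "Th (Suc s) \<subseteq> Th s"
proof
  fix c assume "c \<in> Th (Suc s)"
  then obtain f where f: "f \<in> M (Suc s) c" using Th_iff by blast
  have "f \<in> M s c" using M_D[OF f] nested by (intro M_I) auto
  then show "c \<in> Th s" by (rule Th_I)
qed

lemma nr_mono: "c \<in> Th (Suc s) \<Longrightarrow> nr s c \<le> nr (Suc s) c"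
proof -
  assume c: "c \<in> Th (Suc s)"
  show ?thesis
  proof (rule nr_ge[OF c])
    fix f assume f: "f \<in> M (Suc s) c"
    have fs: "f \<in> M s c" using M_D[OF f] nested by (intro M_I) auto
    have "nr s c \<le> N s f" by (rule nr_le[OF fs])
    also have "\<dots> \<le> N (Suc s) f" using norm_mono M_D(1)[OF f] by blast
    finally show "nr s c \<le> N (Suc s) f" .
  qed
qed

lemma P2: "frame_seq (X s) (N s) (Th s) (nr s) g \<longleftrightarrow> condA3 X N g s"
proof
  assume "frame_seq (X s) (N s) (Th s) (nr s) g"
  then obtain A where A: "A > 0" "\<forall>f\<in>X s. A * N s f \<le> nr s (\<lambda>i. g i f)" unfolding frame_seq_def by blast
  have "condA3_with X N g s (min A 1)" unfolding condA3_with_def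
  proof (intro conjI ballI)
    show "0 < min A 1" using A by simp
    show "min A 1 \<le> 1" by simp
    fix f ft assume f: "f \<in> X s" and ft: "ft \<in> M s (\<lambda>i. g i f)"
    have "min A 1 * N s f \<le> A * N s f" using N_nonneg[OF f] by (intro mult_right_mono) auto
    also have "\<dots> \<le> nr s (\<lambda>i. g i f)" using A f by blast
    also have "\<dots> \<le> N s ft" by (rule nr_le[OF ft])
    finally show "min A 1 * N s f \<le> N s ft" .
  qed
  then show "condA3 X N g s" unfolding condA3_def by blast
next
  assume "condA3 X N g s"
  then obtain A where A: "condA3_with X N g s A" unfolding condA3_def by blast
  have "\<forall>f\<in>X s. A * N s f \<le> nr s (\<lambda>i. g i f)"
  proof
    fix f assume f: "f \<in> X s"
    show "A * N s f \<le> nr s (\<lambda>i. g i f)"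
      using A f bessel[of s] unfolding condA3_with_def bessel_seq_def by (intro nr_ge) auto
  qed
  then show "frame_seq (X s) (N s) (Th s) (nr s) g"
    unfolding frame_seq_def using bessel[of s] A unfolding condA3_with_def by blast
qed

lemma P2t: "condA3_with X N g s 1 \<Longrightarrow> tight_frame_seq (X s) (N s) (Th s) (nr s) g"
proof -
  assume A: "condA3_with X N g s 1"
  have "\<forall>f\<in>X s. 1 * N s f \<le> nr s (\<lambda>i. g i f)"
  proof
    fix f assume f: "f \<in> X s"
    show "1 * N s f \<le> nr s (\<lambda>i. g i f)"
      using A f bessel[of s] unfolding condA3_with_def bessel_seq_def by (intro nr_ge) auto
  qed
  then show ?thesis unfolding tight_frame_seq_def using bessel[of s] by (intro exI[of _ 1]) auto
qed


lemma unit_Th: "unit_vec k \<in> Th s"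
proof -
  obtain y where y: "y \<in> (\<Inter>t. X t)" "g k y \<noteq> 0" using gnz_F by blast
  have ys: "y \<in> X s" using y by blast
  define f where "f = (1 / g k y) *\<^sub>R y"
  have fs: "f \<in> X s" unfolding f_def using ys sub by (rule subspace_scale[rotated])
  have gf: "g i f = g i y / g k y" for i unfolding f_def using g_scale[OF ys] by simp
  have "f \<in> M s (unit_vec k)"
  proof (rule M_I[OF fs])
    fix i show "\<bar>unit_vec k i\<bar> \<le> \<bar>g i f\<bar>" unfolding unit_vec_def gf using y(2) by simp
  qed
  then show ?thesis by (rule Th_I)
qed

lemma sum_unit: "(\<Sum>k<n. a k * unit_vec k i) = (if i < n then a i else 0)"
  unfolding unit_vec_def by (induction n) (auto simp: less_Suc_eq)

lemma sum_Th: "(\<lambda>i. \<Sum>k<n. a k * unit_vec k i) \<in> Th s"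
proof (induction n)
  case 0 then show ?case using zero_Th by simp
next
  case (Suc n)
  from add(1)[OF Suc scale(1)[OF unit_Th, of "a n"]] show ?case by simp
qed

lemma coef_unique:
  assumes c: "c \<in> Th s" and lim: "(\<lambda>n. nr s (\<lambda>i. c i - (\<Sum>k<n. a k * unit_vec k i))) \<longlonglongrightarrow> 0"
  shows "a = c"
proof
  fix i
  have dT: "(\<lambda>j. c j - (\<Sum>k<n. a k * unit_vec k j)) \<in> Th s" for n by (rule diff_Th[OF c sum_Th])
  have ev: "eventually (\<lambda>n. \<bar>c i - a i\<bar> \<le> Cg i * nr s (\<lambda>i. c i - (\<Sum>k<n. a k * unit_vec k i))) sequentially"
    unfolding eventually_sequentially
  proof (intro exI[of _ "Suc i"] allI impI)
    fix n assume "Suc i \<le> n"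
    then have "(\<Sum>k<n. a k * unit_vec k i) = a i" using sum_unit by simp
    then show "\<bar>c i - a i\<bar> \<le> Cg i * nr s (\<lambda>i. c i - (\<Sum>k<n. a k * unit_vec k i))"
      using coord[OF dT[of n], of i] by simp
  qed
  have "(\<lambda>n. Cg i * nr s (\<lambda>i. c i - (\<Sum>k<n. a k * unit_vec k i))) \<longlonglongrightarrow> Cg i * 0"
    using lim by (rule tendsto_mult_left)
  then have "\<bar>c i - a i\<bar> \<le> Cg i * 0" using ev by (intro tendsto_le[OF _ _ tendsto_const]) auto
  then show "a i = c i" by simp
qed

lemma tail_lim:
  assumes c: "c \<in> Th s" and A2: "condA2 X N g s"
  shows "(\<lambda>n. nr s (\<lambda>i. c i - (\<Sum>k<n. c k * unit_vec k i))) \<longlonglongrightarrow> 0"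
  unfolding LIMSEQ_iff
proof (intro allI impI)
  fix e :: real assume e: "0 < e"
  obtain k f where kf: "k \<ge> 1" "f \<in> M s (\<lambda>i. if i < k then 0 else c i)" "N s f < e"
    using A2 c e unfolding condA2_def by blast
  show "\<exists>no. \<forall>n\<ge>no. norm (nr s (\<lambda>i. c i - (\<Sum>k<n. c k * unit_vec k i)) - 0) < e"
  proof (intro exI[of _ k] allI impI)
    fix n assume n: "k \<le> n"
    have eq: "(\<lambda>i. c i - (\<Sum>k<n. c k * unit_vec k i)) = (\<lambda>i. if i < n then 0 else c i)"
      using sum_unit by auto
    have fn: "f \<in> M s (\<lambda>i. if i < n then 0 else c i)"
    proof (rule M_I[OF M_D(1)[OF kf(2)]])
      fix i show "\<bar>if i < n then 0 else c i\<bar> \<le> \<bar>g i f\<bar>"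
        using M_D(2)[OF kf(2), of i] n by (cases "i < n"; cases "i < k") auto
    qed
    have "0 \<le> nr s (\<lambda>i. if i < n then 0 else c i)" using nr_nonneg Th_I[OF fn] by blast
    moreover have "nr s (\<lambda>i. if i < n then 0 else c i) < e" using nr_le[OF fn] kf(3) by simp
    ultimately show "norm (nr s (\<lambda>i. c i - (\<Sum>k<n. c k * unit_vec k i)) - 0) < e" unfolding eq by simp
  qed
qed

lemma P3: "CB_space (Th s) (nr s) \<longleftrightarrow> condA2 X N g s"
proof
  assume CB: "CB_space (Th s) (nr s)"
  show "condA2 X N g s" unfolding condA2_def
  proof (intro ballI allI impI)
    fix c and e :: real assume c: "c \<in> Th s" and e: "0 < e"
    obtain a where a: "(\<lambda>n. nr s (\<lambda>i. c i - (\<Sum>k<n. a k * unit_vec k i))) \<longlonglongrightarrow> 0"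
      using CB c unfolding CB_space_def schauder_basis_def by blast
    have "a = c" by (rule coef_unique[OF c a])
    with a have lim: "(\<lambda>n. nr s (\<lambda>i. c i - (\<Sum>k<n. c k * unit_vec k i))) \<longlonglongrightarrow> 0" by simp
    then obtain n0 where n0: "\<forall>n\<ge>n0. norm (nr s (\<lambda>i. c i - (\<Sum>k<n. c k * unit_vec k i)) - 0) < e"
      unfolding LIMSEQ_iff using e by blast
    define n where "n = max n0 1"
    have eq: "(\<lambda>i. c i - (\<Sum>k<n. c k * unit_vec k i)) = (\<lambda>i. if i < n then 0 else c i)"
      using sum_unit by auto
    have "nr s (\<lambda>i. if i < n then 0 else c i) < e" using n0[rule_format, of n] unfolding n_def eq[unfolded n_def]
      by auto
    moreover have "(\<lambda>i. if i < n then 0 else c i) \<in> Th s" using diff_Th[OF c sum_Th, of c n] eq by simp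
    ultimately obtain f where "f \<in> M s (\<lambda>i. if i < n then 0 else c i)" "N s f < e" using nr_less by blast
    moreover have "n \<ge> 1" unfolding n_def by simp
    ultimately show "\<exists>k\<ge>1. \<exists>f\<in>M s (\<lambda>i. if i < k then 0 else c i). N s f < e" by blast
  qed
next
  assume A2: "condA2 X N g s"
  show "CB_space (Th s) (nr s)" unfolding CB_space_def schauder_basis_def
  proof (intro conjI BK allI ballI unit_Th)
    fix c assume c: "c \<in> Th s"
    show "\<exists>!a. (\<lambda>n. nr s (\<lambda>i. c i - (\<Sum>k<n. a k * unit_vec k i))) \<longlonglongrightarrow> 0"
    proof (rule ex1I[of _ c])
      show "(\<lambda>n. nr s (\<lambda>i. c i - (\<Sum>k<n. c k * unit_vec k i))) \<longlonglongrightarrow> 0" by (rule tail_lim[OF c A2])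
      fix a assume "(\<lambda>n. nr s (\<lambda>i. c i - (\<Sum>k<n. a k * unit_vec k i))) \<longlonglongrightarrow> 0"
      then show "a = c" by (rule coef_unique[OF c])
    qed
  qed
qed

end
theorem theorem5p1:
  fixes X :: "nat \<Rightarrow> 'a::real_vector set"
    and N :: "nat \<Rightarrow> 'a \<Rightarrow> real"
    and g :: "nat \<Rightarrow> 'a \<Rightarrow> real"
  assumes banach: "\<And>s. banach_on (X s) (N s)"
    and refl: "\<And>s. reflexive_on (X s) (N s)"
    and nested: "\<And>s. X (Suc s) \<subseteq> X s"
    and nontriv: "(\<Inter>s. X s) \<noteq> {0}"
    and norm_mono: "\<And>s x. x \<in> X (Suc s) \<Longrightarrow> N s x \<le> N (Suc s) x"
    and dense: "\<And>s x e. x \<in> X s \<Longrightarrow> e > 0 \<Longrightarrow> \<exists>y\<in>(\<Inter>t. X t). N s (x - y) < e"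
    and g_dual: "\<And>i. lin_on (X 0) (g i) \<and> (\<exists>C. \<forall>x\<in>X 0. \<bar>g i x\<bar> \<le> C * N 0 x)"
    and g_nz: "\<And>i. \<exists>x\<in>X 0. g i x \<noteq> 0"
    and A1: "\<And>s. condA1 X N g s"
  shows
    \<comment> \<open>(P1)\<close>
    "(\<forall>s. solid (Theta X g s) (Theta_norm X N g s) \<and> BK_space (Theta X g s) (Theta_norm X N g s))
     \<and> (\<Inter>s. Theta X g s) \<noteq> {\<lambda>i. 0}
     \<and> (\<forall>s. Theta X g (Suc s) \<subseteq> Theta X g s)
     \<and> (\<forall>s. \<forall>c\<in>Theta X g (Suc s). Theta_norm X N g s c \<le> Theta_norm X N g (Suc s) c)
     \<and> (\<forall>s. bessel_seq (X s) (N s) (Theta X g s) (Theta_norm X N g s) g 1)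
     \<comment> \<open>(P2)\<close>
     \<and> (\<forall>s\<ge>1. (frame_seq (X s) (N s) (Theta X g s) (Theta_norm X N g s) g \<longleftrightarrow> condA3 X N g s)
               \<and> (condA3_with X N g s 1 \<longrightarrow>
                    tight_frame_seq (X s) (N s) (Theta X g s) (Theta_norm X N g s) g))
     \<comment> \<open>(P3)\<close>
     \<and> (\<forall>s\<ge>1. CB_space (Theta X g s) (Theta_norm X N g s) \<longleftrightarrow> condA2 X N g s)"
proof -
  interpret fsetting X N g using banach refl nested norm_mono dense g_dual g_nz A1 by unfold_locales
  have p1: "\<forall>s. solid (Theta X g s) (Theta_norm X N g s) \<and> BK_space (Theta X g s) (Theta_norm X N g s)"
    using solid BK by simp
  have p2: "\<forall>s. Theta X g (Suc s) \<subseteq> Theta X g s" using Th_mono by simp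
  have p3: "\<forall>s. \<forall>c\<in>Theta X g (Suc s). Theta_norm X N g s c \<le> Theta_norm X N g (Suc s) c"
    using nr_mono by simp
  have p4: "\<forall>s. bessel_seq (X s) (N s) (Theta X g s) (Theta_norm X N g s) g 1" using bessel by simp
  have p5: "\<forall>s\<ge>1. (frame_seq (X s) (N s) (Theta X g s) (Theta_norm X N g s) g \<longleftrightarrow> condA3 X N g s)
               \<and> (condA3_with X N g s 1 \<longrightarrow>
                    tight_frame_seq (X s) (N s) (Theta X g s) (Theta_norm X N g s) g)"
    using P2 P2t by simp
  have p6: "\<forall>s\<ge>1. CB_space (Theta X g s) (Theta_norm X N g s) \<longleftrightarrow> condA2 X N g s" using P3 by simp
  show ?thesis using p1 inter_nz p2 p3 p4 p5 p6 by (intro conjI)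
qed

end
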